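(* For all integers $r\geqslant 1$ and $0\leqslant j\leqslant r$, in $\mathbb{C}[\alpha,\beta,\gamma]$ we have: (i) $\rho_j\phi_{r-j}\zeta_{r-j}\in J_r$; (ii) $\alpha\,\eta_j\psi_{r-j}\zeta_{r-j}\in J_r$.
   Context: Polynomials $\zeta_k\in\mathbb{C}[\alpha,\beta,\gamma]$: $\zeta_i=0$ for $i<0$, $\zeta_0=1$, $\zeta_{k+1}=\alpha\zeta_k+k^2(\beta+(-1)^k8)\zeta_{k-1}+2k(k-1)\gamma\zeta_{k-2}$ for $k\geqslant0$; $J_k$ is the ideal $(\zeta_k,\zeta_{k+1},\zeta_{k+2})$. Set $\beta_+=\beta+8$, $\beta_-=\beta-8$, $\phi_r=\beta_-^{\lfloor r/2\rfloor+1}\beta_+^{\lceil r/2\rceil}$, $\psi_r=\beta_-^{\lfloor r/2\rfloor}\beta_+^{\lceil r/2\rceil}$, $\rho_j=\beta_-^{2\lfloor (j-1)/2\rfloor}\beta_+^{j-1}$ and $\eta_j=\beta_-^{j-1}\beta_+^{j-1}$ for $j\geqslant1$, and $\rho_j=\eta_j=1$ for $j<1$. *)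

theory Defs
  imports Complex_Main "HOL-Computational_Algebra.Polynomial"
begin

text \<open>The polynomial ring C[alpha,beta,gamma] is represented as the iterated
univariate polynomial ring ((C[alpha])[beta])[gamma], i.e. the type
complex poly poly poly.\<close>

type_synonym mpoly3 = "complex poly poly poly"

definition alpha :: mpoly3 where "alpha = [:[:[:0, 1:]:]:]"
definition beta :: mpoly3 where "beta = [:[:0, 1:]:]"
definition gamma :: mpoly3 where "gamma = [:0, 1:]"

function zeta :: "nat \<Rightarrow> mpoly3" where
  "zeta 0 = 1"
| "zeta (Suc k) = alpha * zeta k
     + of_nat (k^2) * (beta + (-1)^k * 8) * (if k \<ge> 1 then zeta (k - 1) else 0)
     + of_nat (2 * k * (k - 1)) * gamma * (if k \<ge> 2 then zeta (k - 2) else 0)"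
  by pat_completeness auto
termination by (relation "measure id") auto

definition J_mem :: "nat \<Rightarrow> mpoly3 \<Rightarrow> bool" where
  "J_mem k p \<longleftrightarrow> (\<exists>a b c. p = a * zeta k + b * zeta (k + 1) + c * zeta (k + 2))"

definition beta_plus :: mpoly3 where "beta_plus = beta + 8"
definition beta_minus :: mpoly3 where "beta_minus = beta - 8"

definition phi :: "nat \<Rightarrow> mpoly3" where
  "phi r = beta_minus ^ (r div 2 + 1) * beta_plus ^ ((r + 1) div 2)"
definition psi :: "nat \<Rightarrow> mpoly3" where
  "psi r = beta_minus ^ (r div 2) * beta_plus ^ ((r + 1) div 2)"
definition rho :: "nat \<Rightarrow> mpoly3" where
  "rho j = (if j \<ge> 1 then beta_minus ^ (2 * ((j - 1) div 2)) * beta_plus ^ (j - 1) else 1)"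
definition eta :: "nat \<Rightarrow> mpoly3" where
  "eta j = (if j \<ge> 1 then beta_minus ^ (j - 1) * beta_plus ^ (j - 1) else 1)"

end

theory Submission
  imports Defs
begin

declare zeta.simps[simp del]

lemma J_mem_add: "J_mem r p \<Longrightarrow> J_mem r q \<Longrightarrow> J_mem r (p + q)"
proof -
  assume "J_mem r p" "J_mem r q"
  then obtain a b c a' b' c' where "p = a * zeta r + b * zeta (r + 1) + c * zeta (r + 2)"
    "q = a' * zeta r + b' * zeta (r + 1) + c' * zeta (r + 2)" unfolding J_mem_def by blast
  then show ?thesis unfolding J_mem_def
    by (intro exI[of _ "a + a'"] exI[of _ "b + b'"] exI[of _ "c + c'"]) (simp add: algebra_simps)
qed

lemma J_mem_mult: "J_mem r p \<Longrightarrow> J_mem r (q * p)"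
proof -
  assume "J_mem r p"
  then obtain a b c where "p = a * zeta r + b * zeta (r + 1) + c * zeta (r + 2)"
    unfolding J_mem_def by blast
  then show ?thesis unfolding J_mem_def
    by (intro exI[of _ "q * a"] exI[of _ "q * b"] exI[of _ "q * c"]) (simp add: algebra_simps)
qed

lemma J_mem_mult2: "J_mem r p \<Longrightarrow> J_mem r (p * q)"
  using J_mem_mult[of r p q] by (simp add: mult.commute)

lemma J_mem_neg: "J_mem r p \<Longrightarrow> J_mem r (- p)"
  using J_mem_mult[of r p "-1"] by simp

lemma J_mem_diff: "J_mem r p \<Longrightarrow> J_mem r q \<Longrightarrow> J_mem r (p - q)"
  using J_mem_add[of r p "-q"] J_mem_neg[of r q] by simp

lemma J_mem_0: "J_mem r 0"
  unfolding J_mem_def by (rule exI[of _ 0], rule exI[of _ 0], rule exI[of _ 0]) simp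

lemma J_mem_z0: "J_mem r (zeta r)"
  unfolding J_mem_def by (rule exI[of _ 1], rule exI[of _ 0], rule exI[of _ 0]) simp
lemma J_mem_z1: "J_mem r (zeta (r+1))"
  unfolding J_mem_def by (rule exI[of _ 0], rule exI[of _ 1], rule exI[of _ 0]) simp
lemma J_mem_z2: "J_mem r (zeta (r+2))"
  unfolding J_mem_def by (rule exI[of _ 0], rule exI[of _ 0], rule exI[of _ 1]) simp

lemma unit_nat: "n \<noteq> 0 \<Longrightarrow> \<exists>u::mpoly3. u * of_nat n = 1"
  by (rule exI[of _ "[:[:[:inverse (of_nat n):]:]:]"]) (simp add: of_nat_poly pCons_one)

lemma J_mem_cancel: "J_mem r (of_nat n * p) \<Longrightarrow> n \<noteq> 0 \<Longrightarrow> J_mem r p"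
proof -
  assume h: "J_mem r (of_nat n * p)" and n: "n \<noteq> 0"
  obtain u where u: "u * of_nat n = (1::mpoly3)" using unit_nat[OF n] by blast
  have "J_mem r (u * (of_nat n * p))" using J_mem_mult[OF h] .
  also have "u * (of_nat n * p) = p" by (simp add: mult.assoc[symmetric] u)
  finally show ?thesis .
qed

lemma J_mem_dvd: "J_mem r (a * z) \<Longrightarrow> a dvd b \<Longrightarrow> J_mem r (b * z)"
proof -
  assume h: "J_mem r (a * z)" and "a dvd b"
  then obtain c where "b = a * c" by (auto elim: dvdE)
  then show ?thesis using J_mem_mult[OF h, of c] by (simp add: mult_ac)
qed

definition cc :: "nat \<Rightarrow> mpoly3" where "cc k = (if even k then beta_plus else beta_minus)"

lemma c_eq: "beta + (-1)^k * 8 = cc k"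
  by (simp add: cc_def beta_plus_def beta_minus_def)

lemma zeta_rec: "zeta (Suc (Suc k)) = alpha * zeta (Suc k) + of_nat ((k+1)^2) * cc (k+1) * zeta k
   + of_nat (2*(k+1)*k) * gamma * (if k \<ge> 1 then zeta (k-1) else 0)"
  by (simp only: zeta.simps c_eq) (auto simp del: of_nat_power of_nat_mult of_nat_add)

lemma zeta_key: "of_nat ((k+1)^2) * cc (k+1) * zeta k = zeta (k+2) - alpha * zeta (k+1)
   - of_nat (2*(k+1)*k) * gamma * (if k \<ge> 1 then zeta (k-1) else 0)"
  using zeta_rec[of k] by (simp add: algebra_simps)

lemma J_mem_gamma: "J_mem r p \<Longrightarrow> J_mem (r+1) (gamma * p)"
proof -
  assume "J_mem r p"
  then obtain a b c where p: "p = a * zeta r + b * zeta (r+1) + c * zeta (r+2)"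
    unfolding J_mem_def by blast
  have k: "of_nat (2*(r+2)*(r+1)) * (gamma * zeta r) = zeta (r+3) - alpha * zeta (r+2)
     - of_nat ((r+2)^2) * cc (r+2) * zeta (r+1)"
    using zeta_rec[of "r+1"] by (simp add: algebra_simps numeral_eq_Suc)
  have "J_mem (r+1) (of_nat (2*(r+2)*(r+1)) * (gamma * zeta r))"
    unfolding k
    by (intro J_mem_diff J_mem_mult) (use J_mem_z0 J_mem_z1[of "r+1"] J_mem_z2[of "r+1"] in \<open>simp_all add: numeral_eq_Suc\<close>)
  then have g0: "J_mem (r+1) (gamma * zeta r)" by (rule J_mem_cancel) simp
  have "gamma * p = a * (gamma * zeta r) + (gamma * b) * zeta (r+1) + (gamma * c) * zeta (r+1+1)"
    by (simp add: p algebra_simps)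
  then show ?thesis
    by (metis J_mem_add J_mem_mult g0 J_mem_z0 J_mem_z1)
qed


definition PP :: "nat \<Rightarrow> nat \<Rightarrow> mpoly3" where "PP a b = beta_minus ^ a * beta_plus ^ b"

lemma PP_mult: "PP a b * PP c d = PP (a + c) (b + d)"
  by (simp add: PP_def power_add mult_ac)

lemma PP_dvd: "a \<le> c \<Longrightarrow> b \<le> d \<Longrightarrow> PP a b dvd PP c d"
proof -
  assume "a \<le> c" "b \<le> d"
  then have "PP c d = PP a b * PP (c - a) (d - b)" by (simp add: PP_mult)
  then show ?thesis by simp
qed

lemma PP_dvd2: "a + c \<le> e \<Longrightarrow> b + d \<le> f \<Longrightarrow> PP a b * PP c d dvd PP e f"
  by (simp add: PP_mult PP_dvd)

lemma cc_PP: "cc k = PP (if even k then 0 else 1) (if even k then 1 else 0)"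
  by (simp add: cc_def PP_def)

lemma rho_PP: "rho i = PP (2 * ((i - 1) div 2)) (i - 1)"
  by (simp add: rho_def PP_def)
lemma eta_PP: "eta i = PP (i - 1) (i - 1)"
  by (simp add: eta_def PP_def)
lemma phi_PP: "phi k = PP (k div 2 + 1) ((k + 1) div 2)"
  by (simp add: phi_def PP_def)
lemma psi_PP: "psi k = PP (k div 2) ((k + 1) div 2)"
  by (simp add: psi_def PP_def)

lemma phi_split: "phi k = cc (k + 1) * PP ((k + 1) div 2) (k div 2)"
  unfolding phi_PP cc_PP PP_mult by (cases "even k") (auto elim: evenE oddE)

lemma psi_split: "k \<ge> 1 \<Longrightarrow> psi k = cc (k + 1) * PP ((k - 1) div 2) (k div 2)"
  unfolding psi_PP cc_PP PP_mult
  by (cases "even k") (simp_all, (intro arg_cong2[where f=PP]; presburger)+)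


lemma ring_aux1:
  fixes n c z z2 a z1 m g zp R W :: "'a::comm_ring_1"
  shows "n * c * z = z2 - a * z1 - m * g * zp \<Longrightarrow>
    n * (R * (c * W) * z) = R * W * z2 - R * W * (a * z1) - m * (g * (R * W * zp))"
proof -
  assume h: "n * c * z = z2 - a * z1 - m * g * zp"
  have "n * (R * (c * W) * z) = R * W * (n * c * z)" by (simp add: mult_ac)
  also have "\<dots> = R * W * (z2 - a * z1 - m * g * zp)" by (simp only: h)
  finally show ?thesis by (simp add: algebra_simps)
qed

lemma ring_aux2:
  fixes n c z z2 a z1 m g zp R W :: "'a::comm_ring_1"
  shows "n * c * z = z2 - a * z1 - m * g * zp \<Longrightarrow>
    n * (R * (c * W) * (a * z)) = R * W * (a * z2) - R * W * a * (a * z1) - m * (g * (R * W * (a * zp)))"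
proof -
  assume h: "n * c * z = z2 - a * z1 - m * g * zp"
  have "n * (R * (c * W) * (a * z)) = R * W * a * (n * c * z)" by (simp add: mult_ac)
  also have "\<dots> = R * W * a * (z2 - a * z1 - m * g * zp)" by (simp only: h)
  finally show ?thesis by (simp add: algebra_simps)
qed

lemma main:
  "\<forall>i k. i + k = r \<longrightarrow> J_mem r (rho i * phi k * zeta k) \<and> J_mem r (eta i * psi k * (alpha * zeta k))"
proof (induction r rule: less_induct)
  case (less r)
  note IHr = less.IH
  have "\<forall>k. i + k = r \<longrightarrow> J_mem r (rho i * phi k * zeta k) \<and> J_mem r (eta i * psi k * (alpha * zeta k))" for i
  proof (induction i rule: less_induct)
    case (less i)
    note IHi = less.IH
    show ?case
    proof (intro allI impI)
      fix k assume ik: "i + k = r"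
      show "J_mem r (rho i * phi k * zeta k) \<and> J_mem r (eta i * psi k * (alpha * zeta k))"
      proof (cases "i = 0")
        case True
        then have "k = r" using ik by simp
        then show ?thesis using J_mem_z0[of r]
          by (metis J_mem_mult mult.assoc mult.left_commute)
      next
        case False
        then have i1: "i \<ge> 1" by simp
        define W where "W = PP ((k + 1) div 2) (k div 2)"
        define zp where "zp = (if k \<ge> 1 then zeta (k - 1) else 0)"
        have key: "of_nat ((k+1)^2) * cc (k+1) * zeta k = zeta (k+2) - alpha * zeta (k+1)
           - of_nat (2*(k+1)*k) * gamma * zp"
          unfolding zp_def by (rule zeta_key)
        have P1: "J_mem r (rho i * phi k * zeta k)"
        proof -
          have eq: "of_nat ((k+1)^2) * (rho i * phi k * zeta k) =
             (rho i * W) * zeta (k+2) - (rho i * W) * (alpha * zeta (k+1))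
             - of_nat (2*(k+1)*k) * (gamma * (rho i * W * zp))"
            unfolding phi_split W_def[symmetric] by (rule ring_aux1[OF key])
          have t1: "J_mem r ((rho i * W) * zeta (k+2))"
          proof (cases "i \<le> 2")
            case True
            then have "k + 2 = r \<or> k + 2 = r + 1" using ik i1 by auto
            then show ?thesis using J_mem_z0[of r] J_mem_z1[of r] by (auto intro: J_mem_mult)
          next
            case False
            then have "J_mem r (rho (i-2) * phi (k+2) * zeta (k+2))"
              using IHi[of "i-2"] ik by auto
            moreover have "rho (i-2) * phi (k+2) dvd rho i * W"
              using False unfolding rho_PP phi_PP W_def PP_mult by (intro PP_dvd; presburger)
            ultimately show ?thesis by (rule J_mem_dvd)
          qed
          have t2: "J_mem r ((rho i * W) * (alpha * zeta (k+1)))"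
          proof (cases "i = 1")
            case True
            then have "k + 1 = r" using ik by auto
            then show ?thesis using J_mem_z0[of r] by (auto intro: J_mem_mult)
          next
            case False
            then have "J_mem r (eta (i-1) * psi (k+1) * (alpha * zeta (k+1)))"
              using IHi[of "i-1"] ik i1 by auto
            moreover have "eta (i-1) * psi (k+1) dvd rho i * W"
              using False i1 unfolding rho_PP eta_PP psi_PP W_def PP_mult by (intro PP_dvd; presburger)
            ultimately show ?thesis by (rule J_mem_dvd)
          qed
          have t3: "J_mem r (gamma * (rho i * W * zp))"
          proof (cases "k = 0")
            case True
            then show ?thesis by (simp add: zp_def J_mem_0)
          next
            case False
            then have A: "J_mem (r-1) (rho i * phi (k-1) * zeta (k-1))"
              using IHr[of "r-1"] ik by auto
            have pw: "phi (k-1) = W" using False unfolding phi_PP W_def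
              by (intro arg_cong2[where f=PP]; presburger)
            have "J_mem (r-1+1) (gamma * (rho i * phi (k-1) * zeta (k-1)))"
              by (rule J_mem_gamma[OF A])
            moreover have "r - 1 + 1 = r" using ik False by simp
            ultimately show ?thesis using False pw by (simp add: zp_def)
          qed
          have "J_mem r (of_nat ((k+1)^2) * (rho i * phi k * zeta k))"
            unfolding eq by (intro J_mem_diff t1 t2 J_mem_mult t3)
          then show ?thesis by (rule J_mem_cancel) simp
        qed
        have P2: "J_mem r (eta i * psi k * (alpha * zeta k))"
        proof (cases "k = 0")
          case True
          have z1: "zeta 1 = alpha" by (simp add: zeta.simps)
          have e: "eta i * psi k * (alpha * zeta k) = eta i * zeta 1"
            using True by (simp add: z1 psi_def zeta.simps)
          show ?thesis
          proof (cases "i = 1")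
            case True
            then show ?thesis unfolding e using J_mem_z0[of 1] ik \<open>k = 0\<close> by (simp add: eta_def)
          next
            case False
            then have "J_mem r (rho (i-1) * phi 1 * zeta 1)"
              using IHi[of "i-1"] ik i1 \<open>k = 0\<close> by auto
            moreover have "rho (i-1) * phi 1 dvd eta i"
              using False i1 unfolding rho_PP eta_PP phi_PP
              by (intro PP_dvd2; presburger)
            ultimately show ?thesis unfolding e by (rule J_mem_dvd)
          qed
        next
          case False
          then have k1: "k \<ge> 1" by simp
          define V where "V = PP ((k - 1) div 2) (k div 2)"
          have eq: "of_nat ((k+1)^2) * (eta i * psi k * (alpha * zeta k)) =
             (eta i * V) * (alpha * zeta (k+2)) - (eta i * V * alpha) * (alpha * zeta (k+1))
             - of_nat (2*(k+1)*k) * (gamma * (eta i * V * (alpha * zp)))"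
            unfolding psi_split[OF k1] V_def[symmetric] by (rule ring_aux2[OF key])
          have t1: "J_mem r ((eta i * V) * (alpha * zeta (k+2)))"
          proof (cases "i \<le> 2")
            case True
            then have "k + 2 = r \<or> k + 2 = r + 1" using ik i1 by auto
            then show ?thesis using J_mem_z0[of r] J_mem_z1[of r] by (auto intro: J_mem_mult)
          next
            case False
            then have "J_mem r (eta (i-2) * psi (k+2) * (alpha * zeta (k+2)))"
              using IHi[of "i-2"] ik by auto
            moreover have "eta (i-2) * psi (k+2) dvd eta i * V"
              using False unfolding eta_PP psi_PP V_def PP_mult by (intro PP_dvd; presburger)
            ultimately show ?thesis by (rule J_mem_dvd)
          qed
          have t2: "J_mem r ((eta i * V * alpha) * (alpha * zeta (k+1)))"
          proof (cases "i = 1")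
            case True
            then have "k + 1 = r" using ik by auto
            then show ?thesis using J_mem_z0[of r] by (auto intro: J_mem_mult)
          next
            case False
            then have "J_mem r (eta (i-1) * psi (k+1) * (alpha * zeta (k+1)))"
              using IHi[of "i-1"] ik i1 by auto
            moreover have "eta (i-1) * psi (k+1) dvd eta i * V * alpha"
            proof (rule dvd_mult2)
              show "eta (i-1) * psi (k+1) dvd eta i * V"
                using False i1 unfolding eta_PP psi_PP V_def PP_mult by (intro PP_dvd; presburger)
            qed
            ultimately show ?thesis by (rule J_mem_dvd)
          qed
          have t3: "J_mem r (gamma * (eta i * V * (alpha * zp)))"
          proof -
            have A: "J_mem (r-1) (eta i * psi (k-1) * (alpha * zeta (k-1)))"
              using IHr[of "r-1"] ik k1 by auto
            have pw: "psi (k-1) = V" using k1 unfolding psi_PP V_def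
              by (intro arg_cong2[where f=PP]; presburger)
            have "J_mem (r-1+1) (gamma * (eta i * psi (k-1) * (alpha * zeta (k-1))))"
              by (rule J_mem_gamma[OF A])
            moreover have "r - 1 + 1 = r" using ik k1 by simp
            ultimately show ?thesis using k1 pw by (simp add: zp_def)
          qed
          have "J_mem r (of_nat ((k+1)^2) * (eta i * psi k * (alpha * zeta k)))"
            unfolding eq by (intro J_mem_diff t1 t2 J_mem_mult t3)
          then show ?thesis by (rule J_mem_cancel) simp
        qed
        show ?thesis using P1 P2 by blast
      qed
    qed
  qed
  then show ?case by blast
qed

theorem lemma4p1:
  fixes r j :: nat
  assumes "r \<ge> 1" and "j \<le> r"
  shows "J_mem r (rho j * phi (r - j) * zeta (r - j)) \<and>
         J_mem r (alpha * eta j * psi (r - j) * zeta (r - j))"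
proof -
  have "j + (r - j) = r" using assms by simp
  then have "J_mem r (rho j * phi (r - j) * zeta (r - j)) \<and>
     J_mem r (eta j * psi (r - j) * (alpha * zeta (r - j)))" using main[of r] by blast
  then show ?thesis by (simp add: mult_ac)
qed

end
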